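(* Let $p\geq 0$ and let $G$ be a nearly balanced bipartite graph of order $2n-1$. Then $G$ is $2p$-Hamilton-biconnected if and only if $cl_{n+p+1}(G)$ is $2p$-Hamilton-biconnected.
   Context: A bipartite graph $G=(X,Y;E)$ is nearly balanced if $|X|=|Y|+1$; it is Hamilton-biconnected if for any two distinct $u,v\in X$ there is a Hamiltonian path with ends $u,v$. A vertex set $W$ is balanced if $|W\cap X|=|W\cap Y|$; $G$ is $2p$-Hamilton-biconnected if for every balanced $W$ with $|W|=2p$, the subgraph induced by $V(G)\setminus W$ is Hamilton-biconnected. For an integer $r$, the $r$-biclosure $cl_r(G)$ of a bipartite graph $G=(X,Y;E)$ is the unique smallest bipartite graph $H$ on the same vertex set with the same bipartition such that $G\subseteq H$ and $d_H(x)+d_H(y)<r$ for every non-adjacent pair $x\in X$, $y\in Y$; it is obtained from $G$ by repeatedly joining non-adjacent $x\in X$, $y\in Y$ with degree sum at least $r$ until no such pair remains. *)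

theory Defs
  imports Main
begin

definition bipartite :: "'a set \<Rightarrow> 'a set \<Rightarrow> ('a \<times> 'a) set \<Rightarrow> bool" where
  "bipartite X Y E \<longleftrightarrow> finite X \<and> finite Y \<and> X \<inter> Y = {} \<and> E \<subseteq> X \<times> Y"

definition nearly_balanced :: "'a set \<Rightarrow> 'a set \<Rightarrow> bool" where
  "nearly_balanced X Y \<longleftrightarrow> card X = card Y + 1"

definition adj :: "('a \<times> 'a) set \<Rightarrow> 'a \<Rightarrow> 'a \<Rightarrow> bool" where
  "adj E a b \<longleftrightarrow> (a, b) \<in> E \<or> (b, a) \<in> E"

definition ham_path :: "('a \<times> 'a) set \<Rightarrow> 'a set \<Rightarrow> 'a \<Rightarrow> 'a \<Rightarrow> bool" where
  "ham_path E V u v \<longleftrightarrow> (\<exists>ps. ps \<noteq> [] \<and> distinct ps \<and> set ps = V \<and> hd ps = u \<and> last ps = v \<and>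
      (\<forall>i < length ps - 1. adj E (ps ! i) (ps ! Suc i)))"

definition ham_biconnected :: "'a set \<Rightarrow> 'a set \<Rightarrow> ('a \<times> 'a) set \<Rightarrow> bool" where
  "ham_biconnected X Y E \<longleftrightarrow>
     (\<forall>u \<in> X. \<forall>v \<in> X. u \<noteq> v \<longrightarrow> ham_path (E \<inter> (X \<times> Y)) (X \<union> Y) u v)"

definition balanced :: "'a set \<Rightarrow> 'a set \<Rightarrow> 'a set \<Rightarrow> bool" where
  "balanced X Y W \<longleftrightarrow> card (W \<inter> X) = card (W \<inter> Y)"

definition p2_ham_biconnected :: "nat \<Rightarrow> 'a set \<Rightarrow> 'a set \<Rightarrow> ('a \<times> 'a) set \<Rightarrow> bool" where
  "p2_ham_biconnected p X Y E \<longleftrightarrow>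
     (\<forall>W. W \<subseteq> X \<union> Y \<and> balanced X Y W \<and> card W = 2 * p \<longrightarrow>
          ham_biconnected (X - W) (Y - W) E)"

definition biclosure_step :: "nat \<Rightarrow> 'a set \<Rightarrow> 'a set \<Rightarrow> ('a \<times> 'a) set \<Rightarrow> ('a \<times> 'a) set \<Rightarrow> ('a \<times> 'a) set" where
  "biclosure_step r X Y E S = E \<union> {(x, y). x \<in> X \<and> y \<in> Y \<and>
      card {y' \<in> Y. (x, y') \<in> S} + card {x' \<in> X. (x', y) \<in> S} \<ge> r}"

text \<open>The r-biclosure: the smallest edge set H containing E such that every non-adjacent
  pair x in X, y in Y has degree sum < r in H (least fixed point).\<close>
definition biclosure :: "nat \<Rightarrow> 'a set \<Rightarrow> 'a set \<Rightarrow> ('a \<times> 'a) set \<Rightarrow> ('a \<times> 'a) set" where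
  "biclosure r X Y E = lfp (biclosure_step r X Y E)"

end

theory Submission
  imports Defs
begin

definition pathp :: "('a \<times> 'a) set \<Rightarrow> 'a list \<Rightarrow> bool" where
  "pathp G ps \<longleftrightarrow> (\<forall>i < length ps - 1. adj G (ps ! i) (ps ! Suc i))"

lemma adj_sym: "adj G a b = adj G b a" unfolding adj_def by blast

lemma ham_path_pathp: "ham_path G V u v \<longleftrightarrow>
  (\<exists>ps. ps \<noteq> [] \<and> distinct ps \<and> set ps = V \<and> hd ps = u \<and> last ps = v \<and> pathp G ps)"
  unfolding ham_path_def pathp_def by simp

lemma ham_path_mono: "ham_path G V u v \<Longrightarrow> G \<subseteq> H \<Longrightarrow> ham_path H V u v"
  unfolding ham_path_def adj_def by blast

lemma parity:
  assumes G: "G \<subseteq> X \<times> Y" and d: "X \<inter> Y = {}" and s: "set ps \<subseteq> X \<union> Y"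
    and h: "ps \<noteq> []" "hd ps \<in> X" and p: "pathp G ps"
  shows "i < length ps \<Longrightarrow> (ps ! i \<in> X \<longleftrightarrow> even i)"
proof (induction i)
  case 0 then show ?case using h by (simp add: hd_conv_nth)
next
  case (Suc i)
  have a: "adj G (ps!i) (ps!Suc i)" using p Suc.prems unfolding pathp_def by auto
  have i1: "i < length ps" using Suc.prems by simp
  have e: "(ps!i \<in> X \<and> ps!Suc i \<in> Y) \<or> (ps!Suc i \<in> X \<and> ps!i \<in> Y)"
    using a G unfolding adj_def by blast
  have IH: "ps!i \<in> X \<longleftrightarrow> even i" using Suc.IH i1 by simp
  show ?case using e IH d by auto
qed

lemma pathp_rev: "pathp G ps \<Longrightarrow> pathp G (rev ps)"
  unfolding pathp_def
proof (intro allI impI)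
  fix i assume p: "\<forall>i<length ps - 1. adj G (ps!i) (ps!Suc i)" and i: "i < length (rev ps) - 1"
  define j where "j = length ps - 2 - i"
  have j: "j < length ps - 1" "Suc j = length ps - Suc i" "j = length ps - Suc (Suc i)"
    using i by (auto simp: j_def)
  have "adj G (ps!j) (ps!Suc j)" using p j by auto
  then show "adj G (rev ps ! i) (rev ps ! Suc i)" using i j by (simp add: rev_nth adj_sym)
qed

lemma rev_seg:
  assumes dist: "distinct ps" and ab: "1 \<le> a" "a \<le> b" "Suc b < length ps"
    and H: "\<And>i. Suc i < length ps \<Longrightarrow> i \<noteq> a - 1 \<Longrightarrow> i \<noteq> b \<Longrightarrow> adj F (ps!i) (ps!Suc i)"
    and j1: "adj F (ps!(a-1)) (ps!b)" and j2: "adj F (ps!a) (ps!Suc b)"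
  shows "\<exists>qs. qs \<noteq> [] \<and> distinct qs \<and> set qs = set ps \<and> hd qs = hd ps \<and> last qs = last ps \<and> pathp F qs"
proof -
  define m where "m = length ps"
  define \<sigma> where "\<sigma> i = (if a \<le> i \<and> i \<le> b then a + b - i else i)" for i
  define qs where "qs = map (\<lambda>i. ps ! \<sigma> i) [0..<m]"
  have len: "length qs = m" by (simp add: qs_def)
  have qn: "qs!i = ps!\<sigma> i" if "i < m" for i using that by (simp add: qs_def)
  have sl: "\<sigma> i < m" if "i < m" for i using that ab by (auto simp add: \<sigma>_def m_def)
  have ss: "\<sigma> (\<sigma> i) = i" for i using ab by (auto simp: \<sigma>_def)
  have sinj: "\<sigma> i = \<sigma> j \<Longrightarrow> i = j" for i j by (metis ss)
  have ne: "qs \<noteq> []" using len ab m_def by auto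
  have dq: "distinct qs"
    unfolding distinct_conv_nth len
  proof (intro allI impI)
    fix i j assume ij: "i < m" "j < m" "i \<noteq> j"
    then have "\<sigma> i \<noteq> \<sigma> j" using sinj by blast
    then show "qs!i \<noteq> qs!j" using ij qn sl nth_eq_iff_index_eq[OF dist] m_def by simp
  qed
  have sq: "set qs = set ps"
  proof
    show "set qs \<subseteq> set ps"
    proof
      fix x assume "x \<in> set qs"
      then obtain i where "i < m" "x = qs!i" using len by (metis in_set_conv_nth)
      then show "x \<in> set ps" using qn sl m_def by auto
    qed
    show "set ps \<subseteq> set qs"
    proof
      fix x assume "x \<in> set ps"
      then obtain j where j: "j < m" "x = ps!j" using m_def by (metis in_set_conv_nth)
      then have "qs!(\<sigma> j) = x" using qn[OF sl[OF j(1)]] ss[of j] by simp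
      then show "x \<in> set qs" using sl j len by (metis nth_mem)
    qed
  qed
  have pne: "ps \<noteq> []" using ab by auto
  have hq: "hd qs = hd ps" using ne pne ab m_def qn[of 0] by (simp add: hd_conv_nth \<sigma>_def)
  have lq: "last qs = last ps"
  proof -
    have "m - 1 < m" using ab m_def by auto
    moreover have "\<sigma> (m - 1) = m - 1" using ab m_def by (auto simp add: \<sigma>_def)
    ultimately show ?thesis using ne pne len qn ab m_def by (simp add: last_conv_nth)
  qed
  have pq: "pathp F qs"
    unfolding pathp_def len
  proof (intro allI impI)
    fix i assume i: "i < m - 1"
    then have q1: "qs!i = ps!\<sigma> i" and q2: "qs!Suc i = ps!\<sigma> (Suc i)" using qn by auto
    show "adj F (qs!i) (qs!Suc i)"
    proof (cases "Suc i < a")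
      case True
      then have "\<sigma> i = i" "\<sigma> (Suc i) = Suc i" "i \<noteq> a - 1" "i \<noteq> b" "Suc i < length ps"
        using ab i m_def by (auto simp add: \<sigma>_def)
      then show ?thesis using q1 q2 H[of i] by simp
    next
      case f1: False
      show ?thesis
      proof (cases "Suc i = a")
        case True
        have "\<sigma> i = a - 1" "\<sigma> (Suc i) = b" using True ab by (auto simp add: \<sigma>_def)
        then show ?thesis using q1 q2 j1 by simp
      next
        case f2: False
        show ?thesis
        proof (cases "i < b")
          case True
          define t where "t = a + b - i - 1"
          have t: "Suc t = a + b - i" "Suc t < length ps" "t \<noteq> a - 1" "t \<noteq> b"
            using True f1 f2 ab by (auto simp: t_def)
          have "adj F (ps!t) (ps!Suc t)" using H[OF t(2) t(3) t(4)] .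
          moreover have "\<sigma> i = Suc t" "\<sigma> (Suc i) = t"
          proof -
            have ai: "a \<le> i" using f1 f2 by simp
            have "\<sigma> i = a + b - i" "\<sigma> (Suc i) = a + b - Suc i" using ai True by (simp_all add: \<sigma>_def)
            moreover have "a + b - i = Suc t" "a + b - Suc i = t" using t(1) by linarith+
            ultimately show "\<sigma> i = Suc t" "\<sigma> (Suc i) = t" by simp_all
          qed
          ultimately have "adj F (ps!\<sigma> (Suc i)) (ps!\<sigma> i)" by simp
          then show ?thesis using q1 q2 unfolding adj_def by auto
        next
          case f3: False
          show ?thesis
          proof (cases "i = b")
            case True
            have "\<sigma> i = a" "\<sigma> (Suc i) = Suc b" using True ab by (auto simp add: \<sigma>_def)
            then show ?thesis using q1 q2 j2 by simp
          next
            case False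
            then have "\<sigma> i = i" "\<sigma> (Suc i) = Suc i" "i \<noteq> a - 1" "i \<noteq> b" "Suc i < length ps"
              using f3 f1 f2 ab i m_def by (auto simp add: \<sigma>_def)
            then show ?thesis using q1 q2 H[of i] by simp
          qed
        qed
      qed
    qed
  qed
  show ?thesis using ne dq sq hq lq pq by blast
qed

lemma core:
  assumes dj: "X' \<inter> Y' = {}" and FX: "F \<subseteq> X' \<times> Y'"
    and x0: "x0 \<in> X'" and y0: "y0 \<in> Y'"
    and ps: "distinct ps" "set ps = X' \<union> Y'" "ps \<noteq> []" "hd ps \<in> X'" "pathp (insert (x0,y0) F) ps"
    and k: "Suc k < length ps" "ps!k = x0" "ps!Suc k = y0"
    and nin: "(x0,y0) \<notin> F"
    and deg: "card {y\<in>Y'. (x0,y) \<in> F} + card {x\<in>X'. (x,y0) \<in> F} \<ge> card Y' + 2"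
  shows "\<exists>qs. qs \<noteq> [] \<and> distinct qs \<and> set qs = set ps \<and> hd qs = hd ps \<and> last qs = last ps \<and> pathp F qs"
proof -
  define m where "m = length ps"
  have GX: "insert (x0,y0) F \<subseteq> X' \<times> Y'" using FX x0 y0 by auto
  have sps: "set ps \<subseteq> X' \<union> Y'" using ps(2) by simp
  have par: "ps!i \<in> X' \<longleftrightarrow> even i" if "i < m" for i
    using parity[OF GX dj sps ps(3) ps(4) ps(5)] that m_def by blast
  have inset: "ps!i \<in> X' \<union> Y'" if "i < m" for i using ps(2) m_def nth_mem that by blast
  have parY: "ps!i \<in> Y' \<longleftrightarrow> odd i" if "i < m" for i using par[OF that] inset[OF that] dj by blast
  have H: "adj F (ps!i) (ps!Suc i)" if "Suc i < length ps" "i \<noteq> k" for i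
  proof -
    have a: "adj (insert (x0,y0) F) (ps!i) (ps!Suc i)" using ps(5) that unfolding pathp_def by auto
    have n1: "ps!i \<noteq> x0" using that k nth_eq_iff_index_eq[OF ps(1), of i k] by auto
    have n2: "\<not> (ps!i = y0 \<and> ps!Suc i = x0)"
    proof
      assume "ps!i = y0 \<and> ps!Suc i = x0"
      then have "i = Suc k" "Suc i = k" using that k nth_eq_iff_index_eq[OF ps(1)] by auto
      then show False by simp
    qed
    show ?thesis using a n1 n2 unfolding adj_def by auto
  qed
  define A where "A = {j. j < m \<and> (x0, ps!j) \<in> F}"
  define B where "B = {j. Suc j < m \<and> (ps!Suc j, y0) \<in> F}"
  define Od where "Od = {j. j < m \<and> odd j}"
  have AO: "A \<subseteq> Od"
  proof
    fix j assume "j \<in> A"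
    then have "j < m" "ps!j \<in> Y'" using FX by (auto simp: A_def)
    then show "j \<in> Od" using parY by (auto simp: Od_def)
  qed
  have BO: "B \<subseteq> Od"
  proof
    fix j assume "j \<in> B"
    then have "Suc j < m" "ps!Suc j \<in> X'" using FX by (auto simp: B_def)
    then show "j \<in> Od" using par[of "Suc j"] by (auto simp: Od_def)
  qed
  have fO: "finite Od" by (rule finite_subset[of _ "{..<m}"]) (auto simp: Od_def)
  have inj: "inj_on (nth ps) S" if "S \<subseteq> {..<m}" for S
    using inj_on_nth[OF ps(1), of S] that m_def by auto
  have cO: "card Od = card Y'"
  proof -
    have "nth ps ` Od = Y'"
    proof
      show "nth ps ` Od \<subseteq> Y'" using parY by (auto simp: Od_def)
      show "Y' \<subseteq> nth ps ` Od"
      proof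
        fix y assume y: "y \<in> Y'"
        then obtain i where i: "i < m" "ps!i = y" using ps(2) m_def by (metis UnI2 in_set_conv_nth)
        then have "i \<in> Od" using parY y by (auto simp: Od_def)
        then show "y \<in> nth ps ` Od" using i by blast
      qed
    qed
    moreover have "inj_on (nth ps) Od" by (rule inj) (auto simp: Od_def)
    ultimately show ?thesis using card_image by metis
  qed
  have cA: "card A = card {y\<in>Y'. (x0,y) \<in> F}"
  proof -
    have "nth ps ` A = {y\<in>Y'. (x0,y) \<in> F}"
    proof
      show "nth ps ` A \<subseteq> {y\<in>Y'. (x0,y) \<in> F}" using FX by (auto simp: A_def)
      show "{y\<in>Y'. (x0,y) \<in> F} \<subseteq> nth ps ` A"
      proof
        fix y assume y: "y \<in> {y\<in>Y'. (x0,y) \<in> F}"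
        then obtain i where i: "i < m" "ps!i = y" using ps(2) m_def by (metis (no_types, lifting) UnI2 in_set_conv_nth mem_Collect_eq)
        then have "i \<in> A" using y by (auto simp: A_def)
        then show "y \<in> nth ps ` A" using i by blast
      qed
    qed
    moreover have "inj_on (nth ps) A" by (rule inj) (auto simp: A_def)
    ultimately show ?thesis using card_image by metis
  qed
  have fB: "finite B" by (rule finite_subset[of _ "{..<m}"]) (auto simp: B_def)
  have cB: "card {x\<in>X'. (x,y0) \<in> F} \<le> card B + 1"
  proof -
    have sub: "{x\<in>X'. (x,y0) \<in> F} \<subseteq> insert (ps!0) (nth ps ` Suc ` B)"
    proof
      fix x assume x: "x \<in> {x\<in>X'. (x,y0) \<in> F}"
      then obtain i where i: "i < m" "ps!i = x" using ps(2) m_def by (metis (no_types, lifting) UnI1 in_set_conv_nth mem_Collect_eq)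
      show "x \<in> insert (ps!0) (nth ps ` Suc ` B)"
      proof (cases i)
        case 0 then show ?thesis using i by simp
      next
        case (Suc j)
        then have "j \<in> B" using i x by (auto simp: B_def)
        then show ?thesis using i Suc by blast
      qed
    qed
    have "card {x\<in>X'. (x,y0) \<in> F} \<le> card (insert (ps!0) (nth ps ` Suc ` B))"
      by (rule card_mono) (use fB sub in auto)
    also have "\<dots> \<le> Suc (card (nth ps ` Suc ` B))" using fB by (simp add: card_insert_if)
    also have "\<dots> \<le> Suc (card B)"
    proof -
      have "card (nth ps ` Suc ` B) \<le> card (Suc ` B)" using fB by (intro card_image_le) simp
      also have "\<dots> \<le> card B" using fB by (rule card_image_le)
      finally show ?thesis by simp
    qed
    finally show ?thesis by simp
  qed
  have "card A + card B \<ge> card Od + 1" using deg cA cB cO by linarith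
  moreover have "card (A \<union> B) \<le> card Od" using AO BO fO by (intro card_mono) auto
  moreover have "card (A \<union> B) + card (A \<inter> B) = card A + card B"
    using card_Un_Int[OF finite_subset[OF AO fO] fB] by simp
  ultimately have "card (A \<inter> B) \<noteq> 0" by linarith
  then obtain j where jA: "j \<in> A" and jB: "j \<in> B" by (metis card.empty disjoint_iff)
  have jo: "odd j" using jA AO by (auto simp: Od_def)
  have ke: "even k" using par[of k] k x0 m_def by auto
  have jk: "j \<noteq> Suc k" using jA nin k by (auto simp: A_def)
  have xj: "(x0, ps!j) \<in> F" and jm: "j < m" using jA by (auto simp: A_def)
  have yj: "(ps!Suc j, y0) \<in> F" and jm1: "Suc j < m" using jB by (auto simp: B_def)
  show ?thesis
  proof (cases "j < k")
    case True
    show ?thesis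
    proof (rule rev_seg[OF ps(1), of "Suc j" k])
      show "1 \<le> Suc j" "Suc j \<le> k" "Suc k < length ps" using True k by auto
      show "adj F (ps ! i) (ps ! Suc i)" if "Suc i < length ps" "i \<noteq> Suc j - 1" "i \<noteq> k" for i
        using H that by blast
      show "adj F (ps ! (Suc j - 1)) (ps ! k)" using xj k unfolding adj_def by simp
      show "adj F (ps ! Suc j) (ps ! Suc k)" using yj k unfolding adj_def by simp
    qed
  next
    case False
    then have jk2: "Suc k < j" using jk jo ke by presburger
    show ?thesis
    proof (rule rev_seg[OF ps(1), of "Suc k" j])
      show "1 \<le> Suc k" "Suc k \<le> j" "Suc j < length ps" using jk2 jm1 m_def by auto
      show "adj F (ps ! i) (ps ! Suc i)" if "Suc i < length ps" "i \<noteq> Suc k - 1" "i \<noteq> j" for i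
        using H that by simp
      show "adj F (ps ! (Suc k - 1)) (ps ! j)" using xj k unfolding adj_def by simp
      show "adj F (ps ! Suc k) (ps ! Suc j)" using yj k unfolding adj_def by simp
    qed
  qed
qed

lemma step:
  assumes fin: "finite X" "finite Y" and dj: "X \<inter> Y = {}" and SX: "S \<subseteq> X \<times> Y"
    and cXY: "card X = card Y + 1"
    and x0: "x0 \<in> X" and y0: "y0 \<in> Y" and nin: "(x0,y0) \<notin> S"
    and deg: "card {y\<in>Y. (x0,y) \<in> S} + card {x\<in>X. (x,y0) \<in> S} \<ge> card X + p + 1"
    and hb: "p2_ham_biconnected p X Y (insert (x0,y0) S)"
  shows "p2_ham_biconnected p X Y S"
  unfolding p2_ham_biconnected_def
proof (intro allI impI)
  fix W assume W: "W \<subseteq> X \<union> Y \<and> balanced X Y W \<and> card W = 2 * p"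
  define X' where "X' = X - W"
  define Y' where "Y' = Y - W"
  have hb': "ham_biconnected X' Y' (insert (x0,y0) S)" using hb W unfolding p2_ham_biconnected_def X'_def Y'_def by blast
  have fW: "finite W" using W fin by (meson finite_Un finite_subset)
  have Wsplit: "W = (W \<inter> X) \<union> (W \<inter> Y)" using W by blast
  have "card W = card (W \<inter> X) + card (W \<inter> Y)"
    using card_Un_disjoint[of "W \<inter> X" "W \<inter> Y"] fW dj Wsplit by (metis Int_assoc Int_commute Int_empty_right finite_Int inf_left_commute)
  then have cWX: "card (W \<inter> X) = p" and cWY: "card (W \<inter> Y) = p" using W unfolding balanced_def by auto
  have cY': "card Y' = card Y - p" unfolding Y'_def using card_Diff_subset_Int[of Y W] fin cWY
    by (simp add: Int_commute)
  have pY: "p \<le> card Y" using cWY card_mono[OF fin(2), of "W \<inter> Y"] by auto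
  show "ham_biconnected (X - W) (Y - W) S"
    unfolding ham_biconnected_def X'_def[symmetric] Y'_def[symmetric]
  proof (intro ballI impI)
    fix u v assume u: "u \<in> X'" and v: "v \<in> X'" and uv: "u \<noteq> v"
    have hp: "ham_path (insert (x0,y0) S \<inter> (X' \<times> Y')) (X' \<union> Y') u v"
      using hb' u v uv unfolding ham_biconnected_def by blast
    show "ham_path (S \<inter> (X' \<times> Y')) (X' \<union> Y') u v"
    proof (cases "x0 \<in> X' \<and> y0 \<in> Y'")
      case False
      then have "insert (x0,y0) S \<inter> (X' \<times> Y') = S \<inter> (X' \<times> Y')" by auto
      then show ?thesis using hp by simp
    next
      case True
      define F where "F = S \<inter> (X' \<times> Y')"
      have eqF: "insert (x0,y0) S \<inter> (X' \<times> Y') = insert (x0,y0) F" using True by (auto simp: F_def)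
      have FX: "F \<subseteq> X' \<times> Y'" by (auto simp: F_def)
      have dj': "X' \<inter> Y' = {}" using dj by (auto simp: X'_def Y'_def)
      have ninF: "(x0,y0) \<notin> F" using nin by (auto simp: F_def)
      have d1: "card {y\<in>Y. (x0,y) \<in> S} \<le> card {y\<in>Y'. (x0,y) \<in> F} + p"
      proof -
        have "{y\<in>Y. (x0,y) \<in> S} \<subseteq> {y\<in>Y'. (x0,y) \<in> F} \<union> (W \<inter> Y)"
          using True by (auto simp: F_def Y'_def)
        then have "card {y\<in>Y. (x0,y) \<in> S} \<le> card ({y\<in>Y'. (x0,y) \<in> F} \<union> (W \<inter> Y))"
          by (rule card_mono[rotated]) (use fin in \<open>auto simp: Y'_def\<close>)
        also have "\<dots> \<le> card {y\<in>Y'. (x0,y) \<in> F} + card (W \<inter> Y)" by (rule card_Un_le)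
        finally show ?thesis using cWY by simp
      qed
      have d2: "card {x\<in>X. (x,y0) \<in> S} \<le> card {x\<in>X'. (x,y0) \<in> F} + p"
      proof -
        have "{x\<in>X. (x,y0) \<in> S} \<subseteq> {x\<in>X'. (x,y0) \<in> F} \<union> (W \<inter> X)"
          using True by (auto simp: F_def X'_def)
        then have "card {x\<in>X. (x,y0) \<in> S} \<le> card ({x\<in>X'. (x,y0) \<in> F} \<union> (W \<inter> X))"
          by (rule card_mono[rotated]) (use fin in \<open>auto simp: X'_def\<close>)
        also have "\<dots> \<le> card {x\<in>X'. (x,y0) \<in> F} + card (W \<inter> X)" by (rule card_Un_le)
        finally show ?thesis using cWX by simp
      qed
      have degF: "card {y\<in>Y'. (x0,y) \<in> F} + card {x\<in>X'. (x,y0) \<in> F} \<ge> card Y' + 2"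
        using d1 d2 deg cY' cXY pY by linarith
      obtain ps where ps: "ps \<noteq> []" "distinct ps" "set ps = X' \<union> Y'" "hd ps = u" "last ps = v"
        "pathp (insert (x0,y0) F) ps"
        using hp unfolding ham_path_pathp eqF by blast
      show ?thesis
      proof (cases "pathp F ps")
        case True
        then show ?thesis unfolding ham_path_pathp F_def[symmetric] using ps by blast
      next
        case False
        then obtain i where i: "Suc i < length ps" "\<not> adj F (ps!i) (ps!Suc i)"
          unfolding pathp_def by (metis Suc_eq_plus1 less_diff_conv)
        have "adj (insert (x0,y0) F) (ps!i) (ps!Suc i)" using ps(6) i(1) unfolding pathp_def by auto
        then have cases: "(ps!i = x0 \<and> ps!Suc i = y0) \<or> (ps!i = y0 \<and> ps!Suc i = x0)"
          using i(2) unfolding adj_def by auto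
        show ?thesis
        proof (cases "ps!i = x0 \<and> ps!Suc i = y0")
          case True
          obtain qs where "qs \<noteq> [] \<and> distinct qs \<and> set qs = set ps \<and> hd qs = hd ps \<and> last qs = last ps \<and> pathp F qs"
            using core[OF dj' FX _ _ ps(2) ps(3) ps(1) _ ps(6) i(1) _ _ ninF degF] True
              \<open>x0 \<in> X' \<and> y0 \<in> Y'\<close> ps(4) u by blast
          then show ?thesis unfolding ham_path_pathp F_def[symmetric] using ps by metis
        next
          case False
          then have c2: "ps!i = y0" "ps!Suc i = x0" using cases by auto
          define m where "m = length ps"
          define k where "k = m - 2 - i"
          have km: "Suc k < length (rev ps)" using i(1) by (simp add: k_def m_def)
          have rk1: "rev ps ! k = x0"
          proof -
            have "rev ps ! k = ps ! (m - Suc k)" using km by (simp add: rev_nth m_def)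
            also have "m - Suc k = Suc i" using i(1) by (simp add: k_def m_def)
            finally show ?thesis using c2 by simp
          qed
          have rk2: "rev ps ! Suc k = y0"
          proof -
            have "rev ps ! Suc k = ps ! (m - Suc (Suc k))" using km by (simp add: rev_nth m_def)
            also have "m - Suc (Suc k) = i" using i(1) by (simp add: k_def m_def)
            finally show ?thesis using c2 by simp
          qed
          have hr: "hd (rev ps) \<in> X'" using ps(1) ps(5) v by (simp add: hd_rev)
          obtain qs where q: "qs \<noteq> [] \<and> distinct qs \<and> set qs = set (rev ps) \<and> hd qs = hd (rev ps) \<and> last qs = last (rev ps) \<and> pathp F qs"
            using core[OF dj' FX _ _ _ _ _ hr pathp_rev[OF ps(6)] km rk1 rk2 ninF degF]
              \<open>x0 \<in> X' \<and> y0 \<in> Y'\<close> ps(1) ps(2) ps(3) by auto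
          have "rev qs \<noteq> [] \<and> distinct (rev qs) \<and> set (rev qs) = X' \<union> Y' \<and> hd (rev qs) = u \<and> last (rev qs) = v \<and> pathp F (rev qs)"
            using q ps pathp_rev[of F qs] by (simp add: hd_rev last_rev)
          then show ?thesis unfolding ham_path_pathp F_def[symmetric] by blast
        qed
      qed
    qed
  qed
qed

lemma p2_mono:
  assumes "p2_ham_biconnected p X Y E" "E \<subseteq> E'"
  shows "p2_ham_biconnected p X Y E'"
  using assms unfolding p2_ham_biconnected_def ham_biconnected_def
  by (meson Int_mono ham_path_mono order_refl)

theorem lemma2p5:
  fixes X Y :: "'a set" and E :: "('a \<times> 'a) set" and n p :: nat
  assumes "bipartite X Y E"
    and "nearly_balanced X Y"
    and "card X + card Y + 1 = 2 * n"
  shows "p2_ham_biconnected p X Y E \<longleftrightarrow> p2_ham_biconnected p X Y (biclosure (n + p + 1) X Y E)"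
proof -
  have fin: "finite X" "finite Y" and dj: "X \<inter> Y = {}" and EX: "E \<subseteq> X \<times> Y"
    using assms(1) unfolding bipartite_def by auto
  have cXY: "card X = card Y + 1" using assms(2) unfolding nearly_balanced_def .
  have cX: "card X = n" using cXY assms(3) by linarith
  define f where "f = biclosure_step (n + p + 1) X Y E"
  define cl where "cl = biclosure (n + p + 1) X Y E"
  have cl_lfp: "cl = lfp f" unfolding cl_def f_def biclosure_def ..
  have dmono1: "card {y'\<in>Y. (x,y') \<in> S} \<le> card {y'\<in>Y. (x,y') \<in> S'}" if "S \<subseteq> S'" for x S S'
    by (rule card_mono) (use fin that in auto)
  have dmono2: "card {x'\<in>X. (x',y) \<in> S} \<le> card {x'\<in>X. (x',y) \<in> S'}" if "S \<subseteq> S'" for y S S'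
    by (rule card_mono) (use fin that in auto)
  have mono: "mono f"
  proof (rule monoI)
    fix S S' :: "('a \<times> 'a) set" assume SS: "S \<subseteq> S'"
    show "f S \<subseteq> f S'"
    proof
      fix e assume "e \<in> f S"
      then consider "e \<in> E" | x y where "e = (x,y)" "x \<in> X" "y \<in> Y"
        "card {y'\<in>Y. (x,y') \<in> S} + card {x'\<in>X. (x',y) \<in> S} \<ge> n + p + 1"
        unfolding f_def biclosure_step_def by auto
      then show "e \<in> f S'"
      proof cases
        case 1 then show ?thesis unfolding f_def biclosure_step_def by auto
      next
        case 2
        have "card {y'\<in>Y. (x,y') \<in> S'} + card {x'\<in>X. (x',y) \<in> S'} \<ge> n + p + 1"
          using 2(4) dmono1[OF SS, of x] dmono2[OF SS, of y] by linarith
        then show ?thesis using 2 unfolding f_def biclosure_step_def by auto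
      qed
    qed
  qed
  have fixp: "f cl = cl" using lfp_fixpoint[OF mono] cl_lfp by simp
  have clX: "cl \<subseteq> X \<times> Y"
    unfolding cl_lfp by (rule lfp_lowerbound) (use EX in \<open>auto simp: f_def biclosure_step_def\<close>)
  have Ecl: "E \<subseteq> cl" using fixp unfolding f_def biclosure_step_def by auto
  have fincl: "finite cl" using clX fin finite_subset by blast
  show ?thesis
    unfolding cl_def[symmetric]
  proof
    assume "p2_ham_biconnected p X Y E"
    then show "p2_ham_biconnected p X Y cl" using p2_mono Ecl by blast
  next
    assume hcl: "p2_ham_biconnected p X Y cl"
    have main: "E \<subseteq> S \<Longrightarrow> S \<subseteq> cl \<Longrightarrow> p2_ham_biconnected p X Y S" for S
    proof (induction "card (cl - S)" arbitrary: S rule: less_induct)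
      case less
      show ?case
      proof (cases "cl \<subseteq> S")
        case True
        then have "S = cl" using less.prems by blast
        then show ?thesis using hcl by simp
      next
        case False
        have "\<not> f S \<subseteq> S"
        proof
          assume "f S \<subseteq> S"
          then have "lfp f \<subseteq> S" by (rule lfp_lowerbound)
          then show False using False cl_lfp by simp
        qed
        then obtain e where e: "e \<in> f S" "e \<notin> S" by blast
        obtain x0 y0 where exy: "e = (x0, y0)" by fastforce
        have eE: "e \<notin> E" using e less.prems by blast
        then have x0: "x0 \<in> X" and y0: "y0 \<in> Y"
          and deg: "card {y'\<in>Y. (x0,y') \<in> S} + card {x'\<in>X. (x',y0) \<in> S} \<ge> n + p + 1"
          using e(1) exy unfolding f_def biclosure_step_def by auto
        have ecl: "e \<in> cl" using e(1) monoD[OF mono less.prems(2)] fixp by blast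
        have lt: "card (cl - insert e S) < card (cl - S)"
          by (rule psubset_card_mono) (use fincl ecl e(2) in auto)
        have hins: "p2_ham_biconnected p X Y (insert e S)"
          using less.hyps[OF lt] less.prems ecl by blast
        show ?thesis
        proof (rule step[OF fin dj _ cXY x0 y0])
          show "S \<subseteq> X \<times> Y" using less.prems clX by blast
          show "(x0, y0) \<notin> S" using e(2) exy by simp
          show "card X + p + 1 \<le> card {y \<in> Y. (x0, y) \<in> S} + card {x \<in> X. (x, y0) \<in> S}"
            using deg cX by simp
          show "p2_ham_biconnected p X Y (insert (x0, y0) S)" using hins exy by simp
        qed
      qed
    qed
    show "p2_ham_biconnected p X Y E" using main[OF order_refl Ecl] .
  qed
qed

end
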